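(* Fix a positive integer $k$. For all real $\tilde c_0$ and $A_1$, and for every $n\ge0$ and every sequence $s$ of non-negative integers with finitely many nonzero terms, the number $B^n_s$ computed with $w=\tilde c_{k-1}$ is homogeneous of degree $|s|$ in $A_1$: there is a number $\beta^n_s(k)$, depending only on $n,s,k$ (not on $\tilde c_0$ or $A_1$), with $B^n_s=\beta^n_s(k)\,A_1^{|s|}$.
   Context: Given real numbers $\tilde c_0,A_1,w$, set $\tilde c_j=\tilde c_0-jA_1$ for all integers $j$. Sequences $s=(s_0,s_1,\dots)$ are integer sequences with finitely many nonzero terms; $(0)$ the zero sequence; $|s|=\sum s_i$, $[s]=\sum s_i(i+1)$; $\sigma_0=(1,0,0,\dots)$, and for $i\ge1$, $\sigma_i$ has $-1$ at position $i-1$, $+1$ at position $i$, $0$ elsewhere. For $n\ge0$ and $s$ with non-negative entries, $B^n_s$ is defined by induction on $n+[s]$: $B^0_{(0)}=1$, and otherwise $B^n_s=(1-\delta_{s_0,0})(n+|s|-1)(\tilde c_{n+|s|-2}-w)\sum_{l=0}^{n-1}B^l_{s-\sigma_0}+\sum_{i\ge1}(1-\delta_{s_i,0})(s_{i-1}+1)\sum_{l=0}^{n-1}B^l_{s-\sigma_i}$ (empty sums vanish). *)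

theory Defs
  imports Main "HOL.Real"
begin

text \<open>Sequences are represented as functions nat \<Rightarrow> nat (non-negative entries);
  finite support is assumed where needed.\<close>

definition ctil :: "real \<Rightarrow> real \<Rightarrow> int \<Rightarrow> real" where
  "ctil c0 A1 j = c0 - real_of_int j * A1"

definition seq_abs :: "(nat \<Rightarrow> nat) \<Rightarrow> nat" where
  "seq_abs s = (\<Sum>i\<in>{i. s i \<noteq> 0}. s i)"

definition seq_wt :: "(nat \<Rightarrow> nat) \<Rightarrow> nat" where
  "seq_wt s = (\<Sum>i\<in>{i. s i \<noteq> 0}. s i * (i + 1))"

definition minus_sigma :: "(nat \<Rightarrow> nat) \<Rightarrow> nat \<Rightarrow> (nat \<Rightarrow> nat)" where
  "minus_sigma s i = (if i = 0 then s(0 := s 0 - 1)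
                      else s(i - 1 := s (i - 1) + 1, i := s i - 1))"

text \<open>Fuel-bounded version of the recursion; the recursion for B^n_s is on n + [s],
  so fuel n + [s] + 1 always suffices.\<close>
primrec Bf :: "real \<Rightarrow> real \<Rightarrow> real \<Rightarrow> nat \<Rightarrow> nat \<Rightarrow> (nat \<Rightarrow> nat) \<Rightarrow> real" where
  "Bf c0 A1 w 0 n s = 0"
| "Bf c0 A1 w (Suc f) n s =
     (if n = 0 \<and> (\<forall>i. s i = 0) then 1
      else (if s 0 \<noteq> 0 then
              real_of_int (int n + int (seq_abs s) - 1)
              * (ctil c0 A1 (int n + int (seq_abs s) - 2) - w)
              * (\<Sum>l<n. Bf c0 A1 w f l (minus_sigma s 0))
            else 0)
         + (\<Sum>i\<in>{i. 1 \<le> i \<and> s i \<noteq> 0}.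
              real (s (i - 1) + 1) * (\<Sum>l<n. Bf c0 A1 w f l (minus_sigma s i))))"

definition Bcoef :: "real \<Rightarrow> real \<Rightarrow> real \<Rightarrow> nat \<Rightarrow> (nat \<Rightarrow> nat) \<Rightarrow> real" where
  "Bcoef c0 A1 w n s = Bf c0 A1 w (n + seq_wt s + 1) n s"

end

theory Submission
  imports Defs
begin

lemma abs_eq:
  assumes "finite S" "{i. s i \<noteq> 0} \<subseteq> S"
  shows "seq_abs s = sum s S"
  unfolding seq_abs_def
  by (rule sum.mono_neutral_left) (use assms in auto)

lemma abs_ge0:
  assumes "finite {i. s i \<noteq> 0}" "s 0 \<noteq> 0"
  shows "seq_abs (minus_sigma s 0) + 1 = seq_abs s"
proof -
  let ?S = "{i. s i \<noteq> 0}"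
  have 0: "0 \<in> ?S" using assms by auto
  have a: "seq_abs s = sum s ?S" by (rule abs_eq) (use assms in auto)
  have b: "seq_abs (minus_sigma s 0) = sum (minus_sigma s 0) ?S"
    by (rule abs_eq) (use assms in \<open>auto simp: minus_sigma_def\<close>)
  have "sum s ?S = s 0 + sum s (?S - {0})" using sum.remove[OF assms(1) 0] by simp
  moreover have "sum (minus_sigma s 0) ?S = (s 0 - 1) + sum (minus_sigma s 0) (?S - {0})"
    using sum.remove[OF assms(1) 0, of "minus_sigma s 0"] by (simp add: minus_sigma_def)
  moreover have "sum (minus_sigma s 0) (?S - {0}) = sum s (?S - {0})"
    by (rule sum.cong) (auto simp: minus_sigma_def)
  ultimately show ?thesis using a b assms(2) by simp
qed

lemma abs_gei:
  assumes "finite {i. s i \<noteq> 0}" "s i \<noteq> 0" "1 \<le> i"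
  shows "seq_abs (minus_sigma s i) = seq_abs s"
proof -
  let ?S = "insert (i - 1) {i. s i \<noteq> 0}"
  have fin: "finite ?S" using assms by auto
  have i: "i \<in> ?S - {i - 1}" using assms by auto
  have j: "i - 1 \<in> ?S" by auto
  have a: "seq_abs s = sum s ?S" by (rule abs_eq) (use assms in auto)
  have b: "seq_abs (minus_sigma s i) = sum (minus_sigma s i) ?S"
    by (rule abs_eq) (use assms in \<open>auto simp: minus_sigma_def\<close>)
  have fin2: "finite (?S - {i - 1})" using fin by auto
  have e1: "sum g ?S = g (i-1) + g i + sum g (?S - {i - 1} - {i})" for g :: "nat \<Rightarrow> nat"
    using sum.remove[OF fin j, of g] sum.remove[OF fin2 i, of g] by simp
  have "sum (minus_sigma s i) (?S - {i - 1} - {i}) = sum s (?S - {i - 1} - {i})"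
    by (rule sum.cong) (use assms in \<open>auto simp: minus_sigma_def\<close>)
  moreover have "minus_sigma s i (i-1) = s (i-1) + 1" "minus_sigma s i i = s i - 1"
    using assms by (auto simp: minus_sigma_def)
  ultimately show ?thesis using a b e1[of s] e1[of "minus_sigma s i"] assms(2) by simp
qed

lemma fin_ms:
  assumes "finite {i. s i \<noteq> 0}"
  shows "finite {j. minus_sigma s i j \<noteq> 0}"
proof -
  have "{j. minus_sigma s i j \<noteq> 0} \<subseteq> insert (i - 1) {i. s i \<noteq> 0}"
    by (auto simp: minus_sigma_def split: if_splits)
  then show ?thesis using assms finite_subset by blast
qed

lemma main:
  "finite {i. s i \<noteq> 0} \<Longrightarrow>
   Bf c0 A1 (ctil c0 A1 (int k - 1)) f n s =
   Bf 0 1 (ctil 0 1 (int k - 1)) f n s * A1 ^ seq_abs s"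
proof (induction f arbitrary: n s)
  case 0
  then show ?case by simp
next
  case (Suc f)
  let ?w = "ctil c0 A1 (int k - 1)"
  let ?w1 = "ctil 0 1 (int k - 1)"
  let ?m = "seq_abs s"
  show ?case
  proof (cases "n = 0 \<and> (\<forall>i. s i = 0)")
    case True
    then have "?m = 0" by (simp add: seq_abs_def)
    then show ?thesis using True by (simp add: seq_abs_def)
  next
    case False
    have T0: "(if s 0 \<noteq> 0 then
              real_of_int (int n + int ?m - 1)
              * (ctil c0 A1 (int n + int ?m - 2) - ?w)
              * (\<Sum>l<n. Bf c0 A1 ?w f l (minus_sigma s 0))
            else 0) =
          (if s 0 \<noteq> 0 then
              real_of_int (int n + int ?m - 1)
              * (ctil 0 1 (int n + int ?m - 2) - ?w1)
              * (\<Sum>l<n. Bf 0 1 ?w1 f l (minus_sigma s 0))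
            else 0) * A1 ^ ?m"
    proof (cases "s 0 \<noteq> 0")
      case True
      have m: "seq_abs (minus_sigma s 0) + 1 = ?m" using abs_ge0[OF Suc.prems True] .
      have ih: "(\<Sum>l<n. Bf c0 A1 ?w f l (minus_sigma s 0)) =
                (\<Sum>l<n. Bf 0 1 ?w1 f l (minus_sigma s 0)) * A1 ^ seq_abs (minus_sigma s 0)"
        using Suc.IH[OF fin_ms[OF Suc.prems]] by (simp add: sum_distrib_right)
      have c: "ctil c0 A1 (int n + int ?m - 2) - ?w = (ctil 0 1 (int n + int ?m - 2) - ?w1) * A1"
        by (simp add: ctil_def algebra_simps)
      have p: "A1 * A1 ^ seq_abs (minus_sigma s 0) = A1 ^ ?m"
        using m by (metis Suc_eq_plus1 power_Suc)
      show ?thesis using True ih c p by (simp add: ac_simps)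
    qed simp
    have Ti: "real (s (i - 1) + 1) * (\<Sum>l<n. Bf c0 A1 ?w f l (minus_sigma s i)) =
              real (s (i - 1) + 1) * (\<Sum>l<n. Bf 0 1 ?w1 f l (minus_sigma s i)) * A1 ^ ?m"
      if "i \<in> {i. 1 \<le> i \<and> s i \<noteq> 0}" for i
    proof -
      have m: "seq_abs (minus_sigma s i) = ?m" using abs_gei[OF Suc.prems] that by auto
      show ?thesis using Suc.IH[OF fin_ms[OF Suc.prems], of _ i] m
        by (simp add: sum_distrib_right)
    qed
    have S: "(\<Sum>i\<in>{i. 1 \<le> i \<and> s i \<noteq> 0}.
              real (s (i - 1) + 1) * (\<Sum>l<n. Bf c0 A1 ?w f l (minus_sigma s i))) =
             (\<Sum>i\<in>{i. 1 \<le> i \<and> s i \<noteq> 0}.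
              real (s (i - 1) + 1) * (\<Sum>l<n. Bf 0 1 ?w1 f l (minus_sigma s i))) * A1 ^ ?m"
      unfolding sum_distrib_right by (rule sum.cong[OF refl Ti])
    show ?thesis using False
      apply (simp only: Bf.simps if_False)
      using T0 S by (simp add: distrib_right)
  qed
qed

theorem lemma7p8:
  fixes k :: nat
  assumes "k > 0"
  shows "\<exists>\<beta> :: nat \<Rightarrow> (nat \<Rightarrow> nat) \<Rightarrow> real.
           \<forall>(c0::real) (A1::real) (n::nat) (s::nat \<Rightarrow> nat).
             finite {i. s i \<noteq> 0} \<longrightarrow>
             Bcoef c0 A1 (ctil c0 A1 (int k - 1)) n s = \<beta> n s * A1 ^ seq_abs s"
  apply (rule exI[of _ "\<lambda>n s. Bcoef 0 1 (ctil 0 1 (int k - 1)) n s"])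
  unfolding Bcoef_def using main by blast

end
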